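(* For every integer $n\geq 1$, \[ \sum_{k,\ell,d\geq 0}\binom{n-1-d}{\ell}\binom{n-1-k}{d}\binom{n-1-\ell}{k} = \tfrac{1}{2}F_{3n}. \]
   Context: $F_n$ is the Fibonacci sequence: $F_0=0$, $F_1=1$, $F_n=F_{n-1}+F_{n-2}$ for $n\ge2$. Binomial coefficients $\binom{a}{b}$ with $b\ge0$ are taken to be $0$ when $a<b$ (in particular when $a<0$), so the sum is finite. *)

theory Defs
  imports "HOL-Number_Theory.Fib"
begin

definition binz :: "int \<Rightarrow> nat \<Rightarrow> nat" where
  "binz a b = (if a < 0 then 0 else nat a choose b)"

end

theory Submission
  imports Defs "HOL-Computational_Algebra.Polynomial"
begin

definition ph :: real where "ph = (1 + sqrt 5) / 2"
definition ps :: real where "ps = (1 - sqrt 5) / 2"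

lemma ph_sq: "ph^2 = ph + 1"
  by (simp add: ph_def power2_eq_square field_simps)
lemma ps_sq: "ps^2 = ps + 1"
  by (simp add: ps_def power2_eq_square field_simps)
lemma ps_ph: "ps - ph = - sqrt 5"
  by (simp add: ps_def ph_def field_simps)
lemma ps_ph_ne: "ps - ph \<noteq> 0"
  using ps_ph by simp

definition pp :: "nat \<Rightarrow> nat \<Rightarrow> real poly" where
  "pp N i = [:ps,1:]^i * [:ph,1:]^(N-i)"
definition lam :: "nat \<Rightarrow> nat \<Rightarrow> real" where
  "lam N i = ps^i * ph^(N-i)"
definition Xp :: "real poly" where "Xp = [:ps/(ps-ph), -ph/(ps-ph):]"
definition Zp :: "real poly" where "Zp = [:-1/(ps-ph), 1/(ps-ph):]"
definition qq :: "nat \<Rightarrow> nat \<Rightarrow> real poly" where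
  "qq N a = Xp^a * Zp^(N-a)"
definition PP :: "nat \<Rightarrow> nat \<Rightarrow> nat \<Rightarrow> real" where "PP N a i = coeff (pp N i) a"
definition QQ :: "nat \<Rightarrow> nat \<Rightarrow> nat \<Rightarrow> real" where "QQ N a i = coeff (qq N a) i"

lemma eval_N:
  fixes p :: "real poly"
  assumes "degree p \<le> N"
  shows "poly p x = (\<Sum>i\<le>N. coeff p i * x^i)"
proof -
  have "poly p x = (\<Sum>i\<le>degree p. coeff p i * x^i)" by (rule poly_altdef)
  also have "\<dots> = (\<Sum>i\<le>N. coeff p i * x^i)"
    by (rule sum.mono_neutral_left) (use assms in \<open>auto simp: coeff_eq_0\<close>)
  finally show ?thesis .
qed

lemma poly_eq_off:
  fixes p q :: "real poly"
  assumes "\<And>x. x \<noteq> c \<Longrightarrow> poly p x = poly q x"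
  shows "p = q"
proof (rule ccontr)
  assume "p \<noteq> q"
  then have "p - q \<noteq> 0" by simp
  then have "finite {x. poly (p - q) x = 0}" by (rule poly_roots_finite)
  moreover have "UNIV - {c} \<subseteq> {x. poly (p - q) x = 0}" using assms by auto
  ultimately have "finite (UNIV - {c} :: real set)" by (rule finite_subset[rotated])
  then show False by (simp add: infinite_UNIV_char_0)
qed

lemma deg_pp: "i \<le> N \<Longrightarrow> degree (pp N i) \<le> N"
proof -
  assume iN: "i \<le> N"
  have "degree (pp N i) \<le> degree ([:ps,1:]^i) + degree ([:ph,1:]^(N-i))"
    unfolding pp_def by (rule degree_mult_le)
  also have "\<dots> \<le> i + (N - i)"
    by (intro add_mono order.trans[OF degree_power_le]) auto
  finally show ?thesis using iN by simp
qed

lemma deg_qq: "a \<le> N \<Longrightarrow> degree (qq N a) \<le> N"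
proof -
  assume "a \<le> N"
  have "degree (qq N a) \<le> degree (Xp^a) + degree (Zp^(N-a))"
    unfolding qq_def by (rule degree_mult_le)
  also have "\<dots> \<le> a * 1 + (N - a) * 1"
    by (intro add_mono order.trans[OF degree_power_le] mult_left_mono)
       (auto simp: Xp_def Zp_def)
  finally show ?thesis using \<open>a \<le> N\<close> by simp
qed


lemma poly_pp: "poly (pp N i) x = (x + ps)^i * (x + ph)^(N-i)"
  by (simp add: pp_def algebra_simps)

lemma poly_Xp: "poly Xp t = (ps - ph * t)/(ps-ph)"
  by (simp add: Xp_def diff_divide_distrib)
lemma poly_Zp: "poly Zp t = (t - 1)/(ps-ph)"
  by (simp add: Zp_def diff_divide_distrib)
lemma poly_qq: "poly (qq N a) t = ((ps - ph * t)/(ps-ph))^a * ((t - 1)/(ps-ph))^(N-a)"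
  by (simp add: qq_def poly_Xp poly_Zp)

lemma lemX:
  assumes "a \<le> N"
  shows "[:0,1:]^a = (\<Sum>i\<le>N. smult (QQ N a i) (pp N i))"
proof (rule poly_eq_off[where c = "-ph"])
  fix x :: real assume hx: "x \<noteq> -ph"
  then have nz: "x + ph \<noteq> 0" by (simp add: add_eq_0_iff)
  define t where "t = (x + ps) / (x + ph)"
  have e0: "(x+ph)*(ps - ph*t) = x*(ps-ph)"
    using nz by (simp add: t_def field_simps)
  have e1: "(x + ph) * ((ps - ph * t)/(ps-ph)) = x"
    using e0 ps_ph_ne by (simp add: field_simps)
  have e3: "(x+ph)*(t-1) = ps - ph"
    using nz by (simp add: t_def field_simps)
  have e2: "(x + ph) * ((t - 1)/(ps-ph)) = 1"
    using e3 ps_ph_ne by (simp add: field_simps)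
  have "poly (\<Sum>i\<le>N. smult (QQ N a i) (pp N i)) x
      = (\<Sum>i\<le>N. QQ N a i * ((x + ps)^i * (x + ph)^(N-i)))"
    by (simp add: poly_sum poly_pp)
  also have "\<dots> = (\<Sum>i\<le>N. (x+ph)^N * (QQ N a i * t^i))"
  proof (rule sum.cong[OF refl])
    fix i assume "i \<in> {..N}"
    then have "(x+ph)^N = (x+ph)^i * (x+ph)^(N-i)" by (simp add: power_add[symmetric])
    then show "QQ N a i * ((x + ps)^i * (x + ph)^(N-i)) = (x+ph)^N * (QQ N a i * t^i)"
      using nz by (simp add: t_def power_divide field_simps)
  qed
  also have "\<dots> = (x+ph)^N * poly (qq N a) t"
    by (simp add: sum_distrib_left[symmetric] eval_N[OF deg_qq[OF assms]] QQ_def)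
  also have "\<dots> = ((x + ph) * ((ps - ph * t)/(ps-ph)))^a * ((x + ph) * ((t - 1)/(ps-ph)))^(N-a)"
  proof -
    have "(x+ph)^N = (x+ph)^a * (x+ph)^(N-a)" using assms by (simp add: power_add[symmetric])
    then show ?thesis by (simp only: poly_qq power_mult_distrib mult_ac)
  qed
  also have "\<dots> = x^a" by (simp only: e1 e2) simp
  finally show "poly ([:0,1:]^a) x = poly (\<Sum>i\<le>N. smult (QQ N a i) (pp N i)) x" by simp
qed


lemma eigen:
  assumes "i \<le> N" "x \<noteq> -1"
  shows "(1+x)^N * poly (pp N i) (1/(1+x)) = lam N i * poly (pp N i) x"
proof -
  have nz: "1 + x \<noteq> 0" using assms(2) by (simp add: add_eq_0_iff)
  have f1: "(1+x) * (1/(1+x) + ps) = ps * (x + ps)"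
    using nz ps_sq by (simp add: field_simps power2_eq_square)
  have f2: "(1+x) * (1/(1+x) + ph) = ph * (x + ph)"
    using nz ph_sq by (simp add: field_simps power2_eq_square)
  have "(1+x)^N = (1+x)^i * (1+x)^(N-i)" using assms(1) by (simp add: power_add[symmetric])
  then have "(1+x)^N * poly (pp N i) (1/(1+x))
     = ((1+x) * (1/(1+x) + ps))^i * ((1+x) * (1/(1+x) + ph))^(N-i)"
    by (simp only: poly_pp power_mult_distrib mult_ac)
  also have "\<dots> = lam N i * poly (pp N i) x"
    by (simp only: f1 f2 power_mult_distrib poly_pp lam_def mult_ac)
  finally show ?thesis .
qed

lemma Mpoly:
  assumes "a \<le> N"
  shows "[:1,1:]^(N-a) = (\<Sum>i\<le>N. smult (lam N i * QQ N a i) (pp N i))"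
proof (rule poly_eq_off[where c = "-1"])
  fix x :: real assume hx: "x \<noteq> -1"
  then have nz: "1 + x \<noteq> 0" by (simp add: add_eq_0_iff)
  have "poly (\<Sum>i\<le>N. smult (lam N i * QQ N a i) (pp N i)) x
      = (\<Sum>i\<le>N. QQ N a i * (lam N i * poly (pp N i) x))"
    by (simp add: poly_sum mult_ac)
  also have "\<dots> = (\<Sum>i\<le>N. QQ N a i * ((1+x)^N * poly (pp N i) (1/(1+x))))"
    by (rule sum.cong[OF refl]) (simp add: eigen hx)
  also have "\<dots> = (1+x)^N * poly (\<Sum>i\<le>N. smult (QQ N a i) (pp N i)) (1/(1+x))"
    by (simp add: poly_sum sum_distrib_left mult_ac)
  also have "\<dots> = (1+x)^N * (1/(1+x))^a"
    by (simp only: lemX[OF assms, symmetric]) simp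
  also have "\<dots> = (1+x)^(N-a)"
  proof -
    have "(1+x)^N = (1+x)^a * (1+x)^(N-a)" using assms by (simp add: power_add[symmetric])
    then show ?thesis using nz by (simp add: power_one_over)
  qed
  finally show "poly ([:1,1:]^(N-a)) x = poly (\<Sum>i\<le>N. smult (lam N i * QQ N a i) (pp N i)) x"
    by (simp add: add.commute)
qed

lemma Mdecomp:
  assumes "a \<le> N"
  shows "real ((N-a) choose b) = (\<Sum>i\<le>N. lam N i * QQ N a i * PP N b i)"
proof -
  have "coeff ([:1,1:]^(N-a)) b = real ((N-a) choose b)"
  proof (cases "b \<le> N - a")
    case True then show ?thesis by (simp add: coeff_linear_poly_power)
  next
    case False
    have "degree ([:1::real,1:]^(N-a)) \<le> N - a"
      by (rule order.trans[OF degree_power_le]) simp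
    then show ?thesis using False by (simp add: coeff_eq_0 binomial_eq_0)
  qed
  then show ?thesis
    by (simp add: Mpoly[OF assms] coeff_sum PP_def)
qed

lemma Ipoly:
  assumes "j \<le> N"
  shows "[:0,1:]^j = (\<Sum>a\<le>N. smult (PP N a j) (qq N a))"
proof (rule poly_eq_off[where c = "1"])
  fix t :: real assume ht: "t \<noteq> 1"
  define X where "X = (ps - ph * t)/(ps-ph)"
  define Z where "Z = (t - 1)/(ps-ph)"
  have Znz: "Z \<noteq> 0" using ht ps_ph_ne by (simp add: Z_def)
  have g00: "X + ps * Z = ((ps - ph*t) + ps*(t-1))/(ps-ph)"
    by (simp add: X_def Z_def add_divide_distrib)
  have g01: "(ps - ph*t) + ps*(t-1) = t*(ps-ph)" by (simp add: algebra_simps)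
  have g0: "X + ps * Z = t"
    using ps_ph_ne by (simp add: g00 g01)
  have g1: "Z * (X/Z + ps) = t"
    using Znz g0 by (simp add: field_simps)
  have g20: "X + ph * Z = ((ps - ph*t) + ph*(t-1))/(ps-ph)"
    by (simp add: X_def Z_def add_divide_distrib)
  have g21: "(ps - ph*t) + ph*(t-1) = ps-ph" by (simp add: algebra_simps)
  have g22: "X + ph * Z = 1"
    using ps_ph_ne by (simp add: g20 g21)
  have g2: "Z * (X/Z + ph) = 1"
    using Znz g22 by (simp add: field_simps)
  have "poly (\<Sum>a\<le>N. smult (PP N a j) (qq N a)) t = (\<Sum>a\<le>N. PP N a j * (X^a * Z^(N-a)))"
    by (simp add: poly_sum poly_qq X_def Z_def)
  also have "\<dots> = (\<Sum>a\<le>N. Z^N * (PP N a j * (X/Z)^a))"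
  proof (rule sum.cong[OF refl])
    fix a assume "a \<in> {..N}"
    then have "Z^N = Z^a * Z^(N-a)" by (simp add: power_add[symmetric])
    then show "PP N a j * (X^a * Z^(N-a)) = Z^N * (PP N a j * (X/Z)^a)"
      using Znz by (simp add: power_divide field_simps)
  qed
  also have "\<dots> = Z^N * poly (pp N j) (X/Z)"
    by (simp add: sum_distrib_left[symmetric] eval_N[OF deg_pp[OF assms]] PP_def)
  also have "\<dots> = (Z * (X/Z + ps))^j * (Z * (X/Z + ph))^(N-j)"
  proof -
    have "Z^N = Z^j * Z^(N-j)" using assms by (simp add: power_add[symmetric])
    then show ?thesis by (simp only: poly_pp power_mult_distrib mult_ac)
  qed
  also have "\<dots> = t^j" by (simp only: g1 g2) simp
  finally show "poly ([:0,1:]^j) t = poly (\<Sum>a\<le>N. smult (PP N a j) (qq N a)) t" by simp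
qed

lemma Idelta:
  assumes "i \<le> N" "j \<le> N"
  shows "(\<Sum>a\<le>N. QQ N a i * PP N a j) = (if i = j then 1 else 0)"
proof -
  have "([:0,1:]^j :: real poly) = monom 1 j" by (simp add: monom_altdef)
  then have "coeff ([:0,1:]^j :: real poly) i = (if i = j then 1 else 0)"
    by (simp add: coeff_monom)
  then show ?thesis using Ipoly[OF assms(2)]
    by (simp add: coeff_sum QQ_def mult.commute)
qed


lemma Idelta':
  assumes "i \<le> N" "j \<le> N"
  shows "(\<Sum>a\<le>N. PP N a j * QQ N a i) = (if i = j then 1 else 0)"
  using Idelta[OF assms] by (simp add: mult.commute)

lemma delta_sum:
  fixes c :: "nat \<Rightarrow> real"
  assumes "i \<le> N"
  shows "(\<Sum>j\<le>N. c j * (if i = j then 1 else 0)) = c i"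
proof -
  have "(\<Sum>j\<le>N. c j * (if i = j then 1 else 0)) = (\<Sum>j\<le>N. if i = j then c j else 0)"
    by (rule sum.cong) auto
  also have "\<dots> = c i" using assms by (simp add: sum.delta')
  finally show ?thesis .
qed

lemma delta_sum2:
  fixes c :: "nat \<Rightarrow> real"
  assumes "i \<le> N"
  shows "(\<Sum>j\<le>N. c j * (if j = i then 1 else 0)) = c i"
  using delta_sum[OF assms, of c] by (simp add: eq_commute)

lemma Lswap:
  fixes f g :: "nat \<Rightarrow> real" and A B :: "nat \<Rightarrow> nat \<Rightarrow> real"
  shows "(\<Sum>d\<le>N. (\<Sum>i\<le>N. f i * A d i) * (\<Sum>j\<le>N. g j * B d j))
       = (\<Sum>i\<le>N. \<Sum>j\<le>N. f i * g j * (\<Sum>d\<le>N. A d i * B d j))"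
proof -
  have "(\<Sum>d\<le>N. (\<Sum>i\<le>N. f i * A d i) * (\<Sum>j\<le>N. g j * B d j))
      = (\<Sum>d\<le>N. \<Sum>i\<le>N. \<Sum>j\<le>N. f i * A d i * (g j * B d j))"
    by (simp add: sum_product)
  also have "\<dots> = (\<Sum>i\<le>N. \<Sum>d\<le>N. \<Sum>j\<le>N. f i * A d i * (g j * B d j))"
    by (rule sum.swap)
  also have "\<dots> = (\<Sum>i\<le>N. \<Sum>j\<le>N. \<Sum>d\<le>N. f i * A d i * (g j * B d j))"
    by (rule sum.cong[OF refl], rule sum.swap)
  also have "\<dots> = (\<Sum>i\<le>N. \<Sum>j\<le>N. f i * g j * (\<Sum>d\<le>N. A d i * B d j))"
    by (simp add: sum_distrib_left mult_ac)
  finally show ?thesis .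
qed

lemma sq_step:
  assumes "k \<le> N" "l \<le> N"
  shows "(\<Sum>d\<le>N. real ((N-d) choose l) * real ((N-k) choose d))
       = (\<Sum>i\<le>N. lam N i ^ 2 * QQ N k i * PP N l i)"
proof -
  have "(\<Sum>d\<le>N. real ((N-d) choose l) * real ((N-k) choose d))
     = (\<Sum>d\<le>N. (\<Sum>i\<le>N. (lam N i * PP N l i) * QQ N d i) * (\<Sum>j\<le>N. (lam N j * QQ N k j) * PP N d j))"
    by (rule sum.cong[OF refl]) (simp add: Mdecomp assms mult_ac)
  also have "\<dots> = (\<Sum>i\<le>N. \<Sum>j\<le>N. (lam N i * PP N l i) * (lam N j * QQ N k j) * (if i = j then 1 else 0))"
    by (simp only: Lswap) (rule sum.cong[OF refl], rule sum.cong[OF refl], simp add: Idelta)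
  also have "\<dots> = (\<Sum>i\<le>N. (lam N i * PP N l i) * (lam N i * QQ N k i))"
    by (rule sum.cong[OF refl]) (simp add: delta_sum[where c = "\<lambda>j. _ * (lam N j * QQ N k j)"])
  also have "\<dots> = (\<Sum>i\<le>N. lam N i ^ 2 * QQ N k i * PP N l i)"
    by (simp add: power2_eq_square mult_ac)
  finally show ?thesis .
qed


lemma trace_step:
  "(\<Sum>k\<le>N. \<Sum>l\<le>N. \<Sum>d\<le>N. real ((N-d) choose l) * real ((N-k) choose d) * real ((N-l) choose k))
   = (\<Sum>i\<le>N. lam N i ^ 3)"
proof -
  have "(\<Sum>k\<le>N. \<Sum>l\<le>N. \<Sum>d\<le>N. real ((N-d) choose l) * real ((N-k) choose d) * real ((N-l) choose k))
     = (\<Sum>k\<le>N. \<Sum>l\<le>N. (\<Sum>i\<le>N. (lam N i ^ 2 * QQ N k i) * PP N l i) * (\<Sum>m\<le>N. (lam N m * PP N k m) * QQ N l m))"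
  proof (rule sum.cong[OF refl], rule sum.cong[OF refl])
    fix k l assume "k \<in> {..N}" "l \<in> {..N}"
    then have k: "k \<le> N" and l: "l \<le> N" by auto
    have "(\<Sum>d\<le>N. real ((N-d) choose l) * real ((N-k) choose d) * real ((N-l) choose k))
       = (\<Sum>d\<le>N. real ((N-d) choose l) * real ((N-k) choose d)) * real ((N-l) choose k)"
      by (simp add: sum_distrib_right)
    also have "\<dots> = (\<Sum>i\<le>N. (lam N i ^ 2 * QQ N k i) * PP N l i) * (\<Sum>m\<le>N. (lam N m * PP N k m) * QQ N l m)"
    proof -
      have A: "(\<Sum>d\<le>N. real ((N-d) choose l) * real ((N-k) choose d)) = (\<Sum>i\<le>N. (lam N i ^ 2 * QQ N k i) * PP N l i)"
        by (simp add: sq_step[OF k l])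
      have B: "real ((N-l) choose k) = (\<Sum>m\<le>N. (lam N m * PP N k m) * QQ N l m)"
        by (simp add: Mdecomp[OF l] mult_ac)
      show ?thesis by (simp only: A B)
    qed
    finally show "(\<Sum>d\<le>N. real ((N-d) choose l) * real ((N-k) choose d) * real ((N-l) choose k))
       = (\<Sum>i\<le>N. (lam N i ^ 2 * QQ N k i) * PP N l i) * (\<Sum>m\<le>N. (lam N m * PP N k m) * QQ N l m)" .
  qed
  also have "\<dots> = (\<Sum>k\<le>N. \<Sum>i\<le>N. \<Sum>m\<le>N. (lam N i ^ 2 * QQ N k i) * (lam N m * PP N k m) * (if m = i then 1 else 0))"
    by (simp only: Lswap) (rule sum.cong[OF refl], rule sum.cong[OF refl], rule sum.cong[OF refl],
        simp add: Idelta')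
  also have "\<dots> = (\<Sum>k\<le>N. \<Sum>i\<le>N. (lam N i ^ 2 * QQ N k i) * (lam N i * PP N k i))"
    by (rule sum.cong[OF refl], rule sum.cong[OF refl],
        simp add: delta_sum2[where c = "\<lambda>m. _ * (lam N m * PP N _ m)"])
  also have "\<dots> = (\<Sum>i\<le>N. lam N i ^ 3 * (\<Sum>k\<le>N. QQ N k i * PP N k i))"
    by (subst sum.swap) (simp add: sum_distrib_left power3_eq_cube power2_eq_square mult_ac)
  also have "\<dots> = (\<Sum>i\<le>N. lam N i ^ 3)"
    by (rule sum.cong[OF refl]) (simp add: Idelta)
  finally show ?thesis .
qed


lemma lam_sum: "(\<Sum>i\<le>N. lam N i ^ 3) = real (fib (3 * Suc N)) / 2"
proof -
  have c1: "ps^3 = 2*ps + 1" using ps_sq by (simp add: power3_eq_cube power2_eq_square algebra_simps)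
  have c2: "ph^3 = 2*ph + 1" using ph_sq by (simp add: power3_eq_cube power2_eq_square algebra_simps)
  have d: "ps^3 - ph^3 = -2 * sqrt 5" using ps_ph by (simp add: c1 c2 algebra_simps)
  define S where "S = (\<Sum>p<Suc N. (ps^3)^p * (ph^3)^(N-p))"
  have h1: "(\<Sum>i\<le>N. lam N i ^ 3) = S"
    unfolding S_def lessThan_Suc_atMost
  proof (rule sum.cong[OF refl])
    fix i assume "i \<in> {..N}"
    show "lam N i ^ 3 = (ps^3)^i * (ph^3)^(N-i)"
      by (simp only: lam_def power_mult_distrib power_mult[symmetric] mult.commute)
  qed
  have h2: "(ps^3)^(Suc N) - (ph^3)^(Suc N) = (ps^3 - ph^3) * S"
    unfolding S_def by (rule diff_power_eq_sum)
  have h3: "real (fib (3 * Suc N)) = (ph^(3 * Suc N) - ps^(3 * Suc N)) / sqrt 5"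
    unfolding ph_def ps_def by (rule fib_closed_form)
  have h4: "ph^(3 * Suc N) - ps^(3 * Suc N) = 2 * sqrt 5 * S"
    using h2 d by (simp only: power_mult)
  show ?thesis using h1 h3 h4 by simp
qed

theorem proposition7p8:
  fixes n :: nat
  assumes "n \<ge> 1"
  shows "real (\<Sum>k<n. \<Sum>l<n. \<Sum>d<n.
            binz (int n - 1 - int d) l * binz (int n - 1 - int k) d * binz (int n - 1 - int l) k)
         = real (fib (3 * n)) / 2"
proof -
  obtain N where n: "n = Suc N" using assms by (cases n) auto
  have bz: "binz (int N - int d) l = (N - d) choose l" if "d \<le> N" for d l
    using that by (simp add: binz_def nat_diff_distrib)
  have "real (\<Sum>k<n. \<Sum>l<n. \<Sum>d<n.
            binz (int n - 1 - int d) l * binz (int n - 1 - int k) d * binz (int n - 1 - int l) k)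
     = (\<Sum>k\<le>N. \<Sum>l\<le>N. \<Sum>d\<le>N. real ((N-d) choose l) * real ((N-k) choose d) * real ((N-l) choose k))"
    unfolding of_nat_sum of_nat_mult n lessThan_Suc_atMost
  proof (rule sum.cong[OF refl], rule sum.cong[OF refl], rule sum.cong[OF refl])
    fix k l d assume "k \<in> {..N}" "l \<in> {..N}" "d \<in> {..N}"
    then have "k \<le> N" "l \<le> N" "d \<le> N" by auto
    then show "real (binz (int (Suc N) - 1 - int d) l) * real (binz (int (Suc N) - 1 - int k) d) *
          real (binz (int (Suc N) - 1 - int l) k) =
          real ((N-d) choose l) * real ((N-k) choose d) * real ((N-l) choose k)"
      using bz by simp
  qed
  also have "\<dots> = real (fib (3 * n)) / 2"
    by (simp only: trace_step lam_sum n)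
  finally show ?thesis .
qed

end
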